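(* Let $i,j\in[s]$ (equal or not). Every homomorphism from $F_i^{\bullet\bullet}$ to $F_j^{\bullet\bullet}$ (both viewed as ordinary digraphs), if one exists, is a bijection $V(F_i^{\bullet\bullet})\to V(F_j^{\bullet\bullet})$.
   Context: All digraphs are finite and loopless; a tournament is a digraph in which every pair of distinct vertices is joined by exactly one arc. A homomorphism from a digraph $F$ to a digraph $H$ is a map $\varphi:V(F)\to V(H)$ with $(\varphi(u),\varphi(v))\in E(H)$ whenever $(u,v)\in E(F)$. Construction of $F_i^{\bullet\bullet}$: fix $s\in\mathbb{N}^+$, a positive integer $m$, and a tournament $F_0$ on vertex set $[m]$ satisfying: (I) every vertex has out-degree and in-degree at most $2m/3$; (II) there are no disjoint $A_1,A_2\subseteq[m]$ with $|A_1|=|A_2|=\lceil\sqrt m\,\rceil$ such that $(a_1,a_2)$ is an arc for all $a_1\in A_1,a_2\in A_2$; (III) for every $S\subseteq[m]$ with $|S|\ge 2m/13-\sqrt m$, $F_0[S]$ contains a directed cycle. Let $k_1,\dots,k_s$ be integers in the open interval $(2m/3+2,\,5m/6)$ with $k_i>k_{i+1}+1$ for $1\le i<s$. For $i\in[s]$, $F_i^{\bullet\bullet}$ is the digraph on vertex set $[m]\cup\{z_i,w_i\}$ ($z_i,w_i$ two new vertices, called roots) whose arcs are all arcs of $F_0$, together with the arcs $z_i\to v$ and $v\to w_i$ for every $1\le v\le k_i$, and the arcs $u\to z_i$ and $w_i\to u$ for every $k_i<u\le m$. There is no arc between $z_i$ and $w_i$. *)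

theory Defs
  imports Complex_Main
begin

definition is_tournament :: "'a set \<Rightarrow> ('a \<times> 'a) set \<Rightarrow> bool" where
  "is_tournament V E \<longleftrightarrow> E \<subseteq> V \<times> V \<and> (\<forall>v. (v, v) \<notin> E) \<and>
     (\<forall>u\<in>V. \<forall>v\<in>V. u \<noteq> v \<longrightarrow> ((u, v) \<in> E \<longleftrightarrow> (v, u) \<notin> E))"

definition has_dicycle_in :: "('a \<times> 'a) set \<Rightarrow> 'a set \<Rightarrow> bool" where
  "has_dicycle_in E S \<longleftrightarrow> (\<exists>vs. length vs \<ge> 2 \<and> distinct vs \<and> set vs \<subseteq> S \<and>
     (\<forall>i < length vs. (vs ! i, vs ! ((i + 1) mod length vs)) \<in> E))"

definition is_hom :: "'a set \<Rightarrow> ('a \<times> 'a) set \<Rightarrow> 'b set \<Rightarrow> ('b \<times> 'b) set \<Rightarrow> ('a \<Rightarrow> 'b) \<Rightarrow> bool" where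
  "is_hom VF EF VH EH f \<longleftrightarrow> f ` VF \<subseteq> VH \<and> (\<forall>(u, v)\<in>EF. (f u, f v) \<in> EH)"

text \<open>Vertices of the rooted digraphs: base vertices 1..m and the two roots z, w.\<close>
datatype vtx = Base nat | Zr | Wr

definition Fbb_verts :: "nat \<Rightarrow> vtx set" where
  "Fbb_verts m = Base ` {1..m} \<union> {Zr, Wr}"

text \<open>Arcs of the digraph with cut parameter kk (i.e. F_i with kk = k_i).\<close>
definition Fbb_arcs :: "(nat \<times> nat) set \<Rightarrow> nat \<Rightarrow> nat \<Rightarrow> (vtx \<times> vtx) set" where
  "Fbb_arcs E0 m kk =
     {(Base u, Base v) | u v. (u, v) \<in> E0}
   \<union> {(Zr, Base v) | v. 1 \<le> v \<and> v \<le> kk}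
   \<union> {(Base v, Wr) | v. 1 \<le> v \<and> v \<le> kk}
   \<union> {(Base u, Zr) | u. kk < u \<and> u \<le> m}
   \<union> {(Wr, Base u) | u. kk < u \<and> u \<le> m}"

end

theory Submission
  imports Defs
begin

lemma no2:
  assumes t: "is_tournament {1..m} E0"
    and xy: "(x,y) \<in> Fbb_arcs E0 m kk" and yx: "(y,x) \<in> Fbb_arcs E0 m kk"
  shows False
proof -
  have S: "E0 \<subseteq> {1..m} \<times> {1..m}" and L: "\<forall>v. (v, v) \<notin> E0"
    and T: "\<forall>u\<in>{1..m}. \<forall>v\<in>{1..m}. u \<noteq> v \<longrightarrow> ((u, v) \<in> E0) = ((v, u) \<notin> E0)"
    using t unfolding is_tournament_def by blast+
  show False
  proof (cases x)
    case (Base u) note xu = this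
    show False
    proof (cases y)
      case (Base v)
      then have e1: "(u,v) \<in> E0" and e2: "(v,u) \<in> E0" using xy yx xu unfolding Fbb_arcs_def by auto
      have "u \<in> {1..m}" "v \<in> {1..m}" using S e1 by auto
      moreover have "u \<noteq> v" using L e1 by auto
      ultimately show False using T e1 e2 by blast
    next
      case Zr then show False using xy yx xu unfolding Fbb_arcs_def by auto
    next
      case Wr then show False using xy yx xu unfolding Fbb_arcs_def by auto
    qed
  next
    case Zr then show False using xy yx unfolding Fbb_arcs_def by auto
  next
    case Wr then show False using xy yx unfolding Fbb_arcs_def by auto
  qed
qed

lemma noloop:
  assumes t: "is_tournament {1..m} E0"
  shows "(x,x) \<notin> Fbb_arcs E0 m kk"
  using assms unfolding Fbb_arcs_def is_tournament_def by auto

lemma adj: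
  assumes t: "is_tournament {1..m} E0"
    and a: "a \<in> Fbb_verts m" and b: "b \<in> Fbb_verts m" and ne: "a \<noteq> b"
    and nzw: "\<not> (a = Zr \<and> b = Wr)" "\<not> (a = Wr \<and> b = Zr)"
  shows "(a,b) \<in> Fbb_arcs E0 m kk \<or> (b,a) \<in> Fbb_arcs E0 m kk"
proof -
  have T: "\<forall>u\<in>{1..m}. \<forall>v\<in>{1..m}. u \<noteq> v \<longrightarrow> ((u, v) \<in> E0) = ((v, u) \<notin> E0)"
    using t unfolding is_tournament_def by blast
  show ?thesis
  proof (cases a)
    case (Base u) note au = this
    then have u: "u \<in> {1..m}" using a by (auto simp: Fbb_verts_def)
    show ?thesis
    proof (cases b)
      case (Base v)
      then have "v \<in> {1..m}" using b by (auto simp: Fbb_verts_def)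
      moreover have "u \<noteq> v" using ne au Base by auto
      ultimately have "(u,v) \<in> E0 \<or> (v,u) \<in> E0" using T u by blast
      then show ?thesis using au Base unfolding Fbb_arcs_def by blast
    next
      case Zr then show ?thesis using u au by (auto simp: Fbb_arcs_def not_le)
    next
      case Wr then show ?thesis using u au by (auto simp: Fbb_arcs_def not_le)
    qed
  next
    case Zr
    then obtain v where "b = Base v" "v \<in> {1..m}" using b ne nzw by (cases b) (auto simp: Fbb_verts_def)
    then show ?thesis using Zr by (auto simp: Fbb_arcs_def not_le)
  next
    case Wr
    then obtain v where "b = Base v" "v \<in> {1..m}" using b ne nzw by (cases b) (auto simp: Fbb_verts_def)
    then show ?thesis using Wr by (auto simp: Fbb_arcs_def not_le)
  qed
qed

theorem claim4p3:
  fixes m s :: nat and E0 :: "(nat \<times> nat) set" and k :: "nat \<Rightarrow> int"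
    and i j :: nat and \<phi> :: "vtx \<Rightarrow> vtx"
  assumes spos: "s \<ge> 1" and mpos: "m \<ge> 1"
    and tour: "is_tournament {1..m} E0"
    and degI: "\<forall>u\<in>{1..m}. real (card {v. (u, v) \<in> E0}) \<le> 2 * real m / 3
                          \<and> real (card {v. (v, u) \<in> E0}) \<le> 2 * real m / 3"
    and condII: "\<not> (\<exists>A1 A2. A1 \<subseteq> {1..m} \<and> A2 \<subseteq> {1..m} \<and> A1 \<inter> A2 = {} \<and>
                   int (card A1) = \<lceil>sqrt (real m)\<rceil> \<and> int (card A2) = \<lceil>sqrt (real m)\<rceil> \<and>
                   (\<forall>a1\<in>A1. \<forall>a2\<in>A2. (a1, a2) \<in> E0))"
    and condIII: "\<forall>S\<subseteq>{1..m}. real (card S) \<ge> 2 * real m / 13 - sqrt (real m)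
                     \<longrightarrow> has_dicycle_in E0 S"
    and krange: "\<forall>t\<in>{1..s}. 2 * real m / 3 + 2 < real_of_int (k t) \<and> real_of_int (k t) < 5 * real m / 6"
    and kdec: "\<forall>t. 1 \<le> t \<and> t < s \<longrightarrow> k t > k (t + 1) + 1"
    and ij: "i \<in> {1..s}" "j \<in> {1..s}"
    and hom: "is_hom (Fbb_verts m) (Fbb_arcs E0 m (nat (k i))) (Fbb_verts m) (Fbb_arcs E0 m (nat (k j))) \<phi>"
  shows "bij_betw \<phi> (Fbb_verts m) (Fbb_verts m)"
proof -
  let ?V = "Fbb_verts m" and ?A = "Fbb_arcs E0 m (nat (k i))" and ?B = "Fbb_arcs E0 m (nat (k j))"
  have img: "\<phi> ` ?V \<subseteq> ?V" and arc: "\<And>u v. (u,v) \<in> ?A \<Longrightarrow> (\<phi> u, \<phi> v) \<in> ?B"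
    using hom unfolding is_hom_def by auto
  have sep: "\<phi> a \<noteq> \<phi> b" if "(a,b) \<in> ?A" for a b
    using arc[OF that] noloop[OF tour] by metis
  have zw: "\<phi> Zr \<noteq> \<phi> Wr"
  proof
    assume eq: "\<phi> Zr = \<phi> Wr"
    show False
    proof (cases "1 \<le> nat (k i)")
      case True
      have "(Zr, Base 1) \<in> ?A" "(Base 1, Wr) \<in> ?A" using True unfolding Fbb_arcs_def by auto
      then show False using arc eq no2[OF tour] by metis
    next
      case False
      have "(Base 1, Zr) \<in> ?A" "(Wr, Base 1) \<in> ?A" using False mpos unfolding Fbb_arcs_def by auto
      then show False using arc eq no2[OF tour] by metis
    qed
  qed
  have inj: "inj_on \<phi> ?V"
  proof (rule inj_onI)
    fix a b assume a: "a \<in> ?V" and b: "b \<in> ?V" and e: "\<phi> a = \<phi> b"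
    show "a = b"
    proof (rule ccontr)
      assume ne: "a \<noteq> b"
      show False
      proof (cases "(a = Zr \<and> b = Wr) \<or> (a = Wr \<and> b = Zr)")
        case True then show False using zw e by auto
      next
        case False
        then show False using adj[OF tour a b ne, of "nat (k i)"] sep e by metis
      qed
    qed
  qed
  have fin: "finite ?V" unfolding Fbb_verts_def by auto
  have "\<phi> ` ?V = ?V"
    using card_image[OF inj] img fin by (simp add: card_subset_eq)
  then show ?thesis using inj by (simp add: bij_betw_def)
qed

end
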